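(* Let $G$ be an $r$-regular graph and let $0\leq\alpha\leq 1$. (i) Suppose $G$ contains $t$ pairwise vertex-disjoint cliques. Then $S_k(A_{\alpha}(G))\geq \alpha kr+(1-\alpha)(r-k+1)$ for $1\leq k \leq t+1$. (ii) Suppose $G$ contains $c$ pairwise vertex-disjoint induced cycles $C_{g_1}, C_{g_2}, \ldots, C_{g_c}$, each of even length, with lengths $g_1\geq g_2\geq \cdots \geq g_c$. Then $$S_k(A_{\alpha}(G))\geq (\alpha k+1-\alpha)r+2(1-\alpha)\sum_{i=1}^{k-1}\left(1-\frac{4}{g_{i}}\right)$$ for $1\leq k \leq c+1$.
   Context: All graphs are simple and undirected. $A_{\alpha}(G)=\alpha D(G)+(1-\alpha)A(G)$, where $A(G)$ is the adjacency matrix and $D(G)$ the diagonal degree matrix. For a real symmetric matrix $M$ with eigenvalues $\lambda_1(M)\geq\cdots\geq\lambda_n(M)$, $S_k(M)=\sum_{i=1}^k\lambda_i(M)$. A clique of $G$ is a maximal complete subgraph of $G$. $C_g$ denotes a cycle of length $g$. *)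

theory Defs
  imports "Jordan_Normal_Form.Char_Poly" "HOL-Computational_Algebra.Polynomial"
begin

(* A simple undirected graph on the vertex set {0..<n}: E is a symmetric,
   irreflexive adjacency relation (only its values on {0..<n} matter). *)
definition simple_graph :: "nat \<Rightarrow> (nat \<Rightarrow> nat \<Rightarrow> bool) \<Rightarrow> bool" where
  "simple_graph n E \<longleftrightarrow>
     (\<forall>i<n. \<forall>j<n. E i j \<longleftrightarrow> E j i) \<and> (\<forall>i<n. \<not> E i i)"

definition degree :: "nat \<Rightarrow> (nat \<Rightarrow> nat \<Rightarrow> bool) \<Rightarrow> nat \<Rightarrow> nat" where
  "degree n E i = card {j. j < n \<and> E i j}"

definition regular :: "nat \<Rightarrow> (nat \<Rightarrow> nat \<Rightarrow> bool) \<Rightarrow> nat \<Rightarrow> bool" where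
  "regular n E r \<longleftrightarrow> (\<forall>i<n. degree n E i = r)"

definition adj_mat :: "nat \<Rightarrow> (nat \<Rightarrow> nat \<Rightarrow> bool) \<Rightarrow> real mat" where
  "adj_mat n E = mat n n (\<lambda>(i,j). if E i j then 1 else 0)"

definition deg_mat :: "nat \<Rightarrow> (nat \<Rightarrow> nat \<Rightarrow> bool) \<Rightarrow> real mat" where
  "deg_mat n E = mat n n (\<lambda>(i,j). if i = j then real (degree n E i) else 0)"

definition A_alpha :: "real \<Rightarrow> nat \<Rightarrow> (nat \<Rightarrow> nat \<Rightarrow> bool) \<Rightarrow> real mat" where
  "A_alpha \<alpha> n E = \<alpha> \<cdot>\<^sub>m deg_mat n E + (1 - \<alpha>) \<cdot>\<^sub>m adj_mat n E"

definition eigenvalues_desc :: "real mat \<Rightarrow> real list" where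
  "eigenvalues_desc M = rev (sorted_list_of_multiset (proots (char_poly M)))"

definition S_k :: "nat \<Rightarrow> real mat \<Rightarrow> real" where
  "S_k k M = sum_list (take k (eigenvalues_desc M))"

definition complete_set :: "nat \<Rightarrow> (nat \<Rightarrow> nat \<Rightarrow> bool) \<Rightarrow> nat set \<Rightarrow> bool" where
  "complete_set n E K \<longleftrightarrow> K \<subseteq> {0..<n} \<and> (\<forall>u\<in>K. \<forall>v\<in>K. u \<noteq> v \<longrightarrow> E u v)"

definition is_clique :: "nat \<Rightarrow> (nat \<Rightarrow> nat \<Rightarrow> bool) \<Rightarrow> nat set \<Rightarrow> bool" where
  "is_clique n E K \<longleftrightarrow> K \<noteq> {} \<and> complete_set n E K \<and>
     (\<forall>K'. complete_set n E K' \<and> K \<subseteq> K' \<longrightarrow> K' = K)"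

definition induced_cycle :: "nat \<Rightarrow> (nat \<Rightarrow> nat \<Rightarrow> bool) \<Rightarrow> nat list \<Rightarrow> bool" where
  "induced_cycle n E cs \<longleftrightarrow>
     (let g = length cs in
       g \<ge> 3 \<and> distinct cs \<and> set cs \<subseteq> {0..<n} \<and>
       (\<forall>i<g. \<forall>j<g. E (cs ! i) (cs ! j) \<longleftrightarrow>
            (j = (i + 1) mod g \<or> i = (j + 1) mod g)))"

end

theory Submission
  imports Defs "Jordan_Normal_Form.Schur_Decomposition"
begin

definition symm :: "nat \<Rightarrow> real mat \<Rightarrow> bool" where
  "symm n M \<longleftrightarrow> M \<in> carrier_mat n n \<and> (\<forall>i<n. \<forall>j<n. M $$ (i,j) = M $$ (j,i))"

lemma symm_real_eigenvalue:
  assumes S: "symm n M" and n: "n > 0"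
  shows "\<exists>e. eigenvalue M e"
proof -
  have M: "M \<in> carrier_mat n n" and sy: "\<And>i j. i<n \<Longrightarrow> j<n \<Longrightarrow> M $$ (i,j) = M $$ (j,i)"
    using S unfolding symm_def by auto
  define Mc where "Mc = map_mat complex_of_real M"
  have Mc: "Mc \<in> carrier_mat n n" using M unfolding Mc_def by auto
  from char_poly_factorized[OF Mc] obtain as where
    cp: "char_poly Mc = (\<Prod>a\<leftarrow>as. [:- a, 1:])" and len: "length as = n" by blast
  define a where "a = hd as"
  have "a \<in> set as" using len n unfolding a_def by (cases as) auto
  hence "poly (char_poly Mc) a = 0" unfolding cp by (auto simp: poly_prod_list_zero_iff)
  hence "eigenvalue Mc a" using eigenvalue_root_char_poly[OF Mc] by auto
  then obtain v where ev: "eigenvector Mc v a" unfolding eigenvalue_def by auto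
  hence v: "v \<in> carrier_vec n" and v0: "v \<noteq> 0\<^sub>v n" and Mv: "Mc *\<^sub>v v = a \<cdot>\<^sub>v v"
    using Mc unfolding eigenvector_def by auto
  define s where "s = (\<Sum>i<n. \<Sum>j<n. cnj (v$i) * Mc $$ (i,j) * v$j)"
  define N where "N = (\<Sum>i<n. cnj (v$i) * v$i)"
  have rowi: "(\<Sum>j<n. Mc $$ (i,j) * v$j) = a * v$i" if "i<n" for i
  proof -
    have "(Mc *\<^sub>v v) $ i = a * v $ i" using Mv that v by simp
    thus ?thesis using that Mc v by (simp add: mult_mat_vec_def scalar_prod_def lessThan_atLeast0 mult.commute)
  qed
  have "s = (\<Sum>i<n. cnj (v$i) * (\<Sum>j<n. Mc $$ (i,j) * v$j))"
    unfolding s_def by (simp add: sum_distrib_left mult.assoc)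
  also have "\<dots> = (\<Sum>i<n. cnj (v$i) * (a * v$i))" by (intro sum.cong refl) (simp add: rowi)
  also have "\<dots> = a * N" unfolding N_def by (simp add: sum_distrib_left mult_ac)
  finally have sN: "s = a * N" .
  have "cnj s = (\<Sum>i<n. \<Sum>j<n. v$i * Mc $$ (i,j) * cnj (v$j))"
    unfolding s_def Mc_def using M by (simp add: cnj_sum)
  also have "\<dots> = (\<Sum>j<n. \<Sum>i<n. v$i * Mc $$ (i,j) * cnj (v$j))" by (rule sum.swap)
  also have "\<dots> = s" unfolding s_def Mc_def using M sy
    by (intro sum.cong refl) (simp add: mult_ac)
  finally have cs: "cnj s = s" .
  have Nreal: "cnj N = N" unfolding N_def by (simp add: cnj_sum mult.commute)
  obtain i where i: "i < n" "v $ i \<noteq> 0" using v v0 by (metis eq_vecI carrier_vecD index_zero_vec)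
  have "Re N = (\<Sum>i<n. Re (v$i) * Re (v$i) + Im (v$i) * Im (v$i))" unfolding N_def
    by (simp add: Re_sum sum.distrib)
  also have "\<dots> > 0"
  proof (rule sum_pos2[of _ i])
    have "Re (v$i) \<noteq> 0 \<or> Im (v$i) \<noteq> 0" using i(2) by (simp add: complex_eq_iff)
    thus "0 < Re (v$i) * Re (v$i) + Im (v$i) * Im (v$i)"
      by (metis add_pos_nonneg add_nonneg_pos not_real_square_gt_zero zero_le_square)
    show "finite {..<n}" by simp
    show "i \<in> {..<n}" using i by simp
    show "\<And>j. j \<in> {..<n} \<Longrightarrow> 0 \<le> Re (v$j) * Re (v$j) + Im (v$j) * Im (v$j)" by simp
  qed
  finally have N0: "N \<noteq> 0" by auto
  from cs Nreal have "cnj a * N = a * N" unfolding sN by simp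
  hence ca: "cnj a = a" using N0 by simp
  define e where "e = Re a"
  have ae: "a = complex_of_real e" unfolding e_def using ca by (metis Reals_cnj_iff complex_is_Real_iff of_real_Re)
  have "char_poly Mc = map_poly complex_of_real (char_poly M)"
    unfolding Mc_def by (rule of_real_hom.char_poly_hom[OF M])
  hence "complex_of_real (poly (char_poly M) e) = 0"
    using \<open>poly (char_poly Mc) a = 0\<close> unfolding ae by (simp add: of_real_hom.poly_map_poly)
  hence "poly (char_poly M) e = 0" by simp
  thus ?thesis using eigenvalue_root_char_poly[OF M] by auto
qed

definition orthonormal :: "nat \<Rightarrow> real vec list \<Rightarrow> bool" where
  "orthonormal n ws \<longleftrightarrow> set ws \<subseteq> carrier_vec n \<and>
     (\<forall>i<length ws. \<forall>j<length ws. ws!i \<bullet> ws!j = (if i = j then 1 else 0))"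

lemma orthonormal_completion:
  fixes v :: "real vec"
  assumes v: "v \<in> carrier_vec n" and v1: "v \<bullet> v = 1"
  shows "\<exists>ws. length ws = n \<and> orthonormal n ws \<and> hd ws = v"
proof -
  have v0: "v \<noteq> 0\<^sub>v n" using v1 v by auto
  interpret cof_vec_space n "TYPE(real)" .
  define b where "b = basis_completion v"
  from basis_completion[OF v v0, folded b_def]
  have b: "set b \<subseteq> carrier_vec n" and dist_b: "distinct b" 
    and indep: "\<not> lin_dep (set b)" and hdb: "hd b = v" and len_b: "length b = n" by auto
  have n: "n > 0" using v v1 by (cases n) (auto simp: scalar_prod_def)
  from hdb len_b n obtain vs where bv: "b = v # vs" by (cases b, auto)
  define gs where "gs = gram_schmidt n b"
  from gram_schmidt_result[OF b dist_b indep gs_def]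
  have gs: "set gs \<subseteq> carrier_vec n" "corthogonal gs" "length gs = n" by (auto simp: len_b)
  have hdgs: "hd gs = v" unfolding gs_def bv using v by simp
  define ws where "ws = map (\<lambda>w. (1 / sqrt (w \<bullet> w)) \<cdot>\<^sub>v w) gs"
  have pos: "gs!i \<bullet> gs!i > 0" if "i < n" for i
  proof -
    have "gs!i \<bullet> gs!i \<noteq> 0" using corthogonalD[OF gs(2), of i i] that gs(3) by simp
    moreover have "gs!i \<bullet> gs!i \<ge> 0" using conjugate_square_ge_0_vec[of "gs!i"] by simp
    ultimately show ?thesis by simp
  qed
  have gsi: "gs!i \<in> carrier_vec n" if "i < n" for i using gs that by auto
  have "ws!i \<bullet> ws!j = (if i = j then 1 else 0)" if "i<n" "j<n" for i j
  proof -
    have "ws!i \<bullet> ws!j = (1 / sqrt (gs!i \<bullet> gs!i)) * (1 / sqrt (gs!j \<bullet> gs!j)) * (gs!i \<bullet> gs!j)"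
      unfolding ws_def using that gs(3) gsi[OF that(1)] gsi[OF that(2)] by simp
    moreover have "i \<noteq> j \<Longrightarrow> gs!i \<bullet> gs!j = 0" using corthogonalD[OF gs(2), of i j] that gs(3) by simp
    moreover have "(1 / sqrt (gs!i \<bullet> gs!i)) * (1 / sqrt (gs!i \<bullet> gs!i)) * (gs!i \<bullet> gs!i) = 1"
      using pos[OF that(1)] by (simp add: field_simps)
    ultimately show ?thesis by auto
  qed
  moreover have "set ws \<subseteq> carrier_vec n" unfolding ws_def using gs by auto
  moreover have "length ws = n" unfolding ws_def using gs by simp
  moreover have "hd ws = v" unfolding ws_def using hdgs gs(3) n v1
    by (cases gs) auto
  ultimately show ?thesis unfolding orthonormal_def by auto
qed

lemma symm_transpose: "symm n M \<Longrightarrow> transpose_mat M = M"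
  unfolding symm_def by (intro eq_matI) auto

lemma symm_sprod:
  assumes S: "symm n M" and u: "u \<in> carrier_vec n" and w: "w \<in> carrier_vec n"
  shows "u \<bullet> (M *\<^sub>v w) = w \<bullet> (M *\<^sub>v u)"
proof -
  have M: "M \<in> carrier_mat n n" using S unfolding symm_def by auto
  have "u \<bullet> (M *\<^sub>v w) = (transpose_mat M *\<^sub>v u) \<bullet> w"
    using transpose_vec_mult_scalar[OF M w u] by simp
  also have "\<dots> = (M *\<^sub>v u) \<bullet> w" using symm_transpose[OF S] by simp
  also have "\<dots> = w \<bullet> (M *\<^sub>v u)" by (rule comm_scalar_prod[of _ n], use M u w in auto)
  finally show ?thesis .
qed

lemma orth_mat:
  assumes O: "orthonormal n ws" and k: "length ws = k"
  shows "transpose_mat (mat_of_cols n ws) * mat_of_cols n ws = 1\<^sub>m k"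
proof (rule eq_matI)
  fix i j assume i: "i < dim_row (1\<^sub>m k)" and j: "j < dim_col (1\<^sub>m k)"
  have c: "\<And>i. i < k \<Longrightarrow> ws!i \<in> carrier_vec n" using O k unfolding orthonormal_def by auto
  show "(transpose_mat (mat_of_cols n ws) * mat_of_cols n ws) $$ (i, j) = 1\<^sub>m k $$ (i, j)"
    using i j k c[of i] c[of j] O unfolding orthonormal_def by auto
qed (use k in auto)

lemma orth_mat2:
  assumes O: "orthonormal n ws" and k: "length ws = n"
  shows "mat_of_cols n ws * transpose_mat (mat_of_cols n ws) = 1\<^sub>m n"
  by (rule mat_mult_left_right_inverse[OF _ _ orth_mat[OF O k]]) (use k in auto)

lemma sprod_vCons:
  assumes r: "r \<in> carrier_vec (Suc m)" and y: "y \<in> carrier_vec m"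
  shows "r \<bullet> vCons c y = r$0 * c + vec m (\<lambda>j. r$(Suc j)) \<bullet> y"
proof -
  have "r \<bullet> vCons c y = (\<Sum>i = 0..<Suc m. r$i * vCons c y $ i)"
    using r y by (simp add: scalar_prod_def)
  also have "\<dots> = r$0 * c + (\<Sum>i = 0..<m. r$(Suc i) * y $ i)"
    by (subst sum.atLeast0_lessThan_Suc_shift) simp
  also have "\<dots> = r$0 * c + vec m (\<lambda>j. r$(Suc j)) \<bullet> y"
    using y by (simp add: scalar_prod_def)
  finally show ?thesis .
qed

lemma spectral:
  "symm n M \<Longrightarrow> \<exists>us ds. length us = n \<and> length ds = n \<and> orthonormal n us \<and>
      (\<forall>i<n. M *\<^sub>v us!i = ds!i \<cdot>\<^sub>v us!i)"
proof (induction n arbitrary: M)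
  case 0
  then show ?case by (intro exI[of _ "[]"]) (auto simp: orthonormal_def)
next
  case (Suc m M)
  define n where "n = Suc m"
  have S: "symm n M" using Suc.prems n_def by simp
  have M: "M \<in> carrier_mat n n" using S unfolding symm_def by auto
  obtain e where "eigenvalue M e" using symm_real_eigenvalue[OF S] n_def by auto
  from find_eigenvector[OF M this] have "eigenvector M (find_eigenvector M e) e" .
  then obtain v0 where v0: "v0 \<in> carrier_vec n" "v0 \<noteq> 0\<^sub>v n" "M *\<^sub>v v0 = e \<cdot>\<^sub>v v0"
    unfolding eigenvector_def using M by auto
  have p: "v0 \<bullet> v0 > 0" using conjugate_square_greater_0_vec[OF v0(1)] v0(2) by simp
  define v where "v = (1 / sqrt (v0 \<bullet> v0)) \<cdot>\<^sub>v v0"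
  have vc: "v \<in> carrier_vec n" unfolding v_def using v0 by simp
  have v1: "v \<bullet> v = 1" unfolding v_def using v0(1) p by (simp add: field_simps)
  have Mv: "M *\<^sub>v v = e \<cdot>\<^sub>v v" unfolding v_def using mult_mat_vec[OF M v0(1)] v0(3)
    by (simp add: smult_smult_assoc mult.commute)
  obtain ws where ws: "length ws = n" "orthonormal n ws" "hd ws = v"
    using orthonormal_completion[OF vc v1] by auto
  have wsc: "\<And>i. i < n \<Longrightarrow> ws!i \<in> carrier_vec n" using ws unfolding orthonormal_def by auto
  have ws0: "ws!0 = v" using ws n_def by (cases ws) auto
  define W where "W = mat_of_cols n ws"
  have W: "W \<in> carrier_mat n n" unfolding W_def using ws by auto
  have WtW: "transpose_mat W * W = 1\<^sub>m n" unfolding W_def by (rule orth_mat[OF ws(2,1)])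
  have WWt: "W * transpose_mat W = 1\<^sub>m n" unfolding W_def by (rule orth_mat2[OF ws(2,1)])
  define B where "B = transpose_mat W * (M * W)"
  have B: "B \<in> carrier_mat n n" unfolding B_def using W M by auto
  have Bij: "B $$ (i,j) = ws!i \<bullet> (M *\<^sub>v ws!j)" if "i<n" "j<n" for i j
    unfolding B_def using that W M ws wsc[OF that(1)] wsc[OF that(2)] unfolding W_def by (simp add: mult_mat_vec_def)
  have Bsym: "B $$ (i,j) = B $$ (j,i)" if "i<n" "j<n" for i j
    using Bij[OF that] Bij[OF that(2,1)] symm_sprod[OF S wsc[OF that(1)] wsc[OF that(2)]] by simp
  have Bi0: "B $$ (i,0) = (if i = 0 then e else 0)" if "i<n" for i
  proof -
    have "B $$ (i,0) = e * (ws!i \<bullet> ws!0)"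
      using Bij[OF that] n_def ws0 Mv vc wsc[OF that] by simp
    also have "\<dots> = (if i = 0 then e else 0)"
      using ws(2) that ws(1) n_def unfolding orthonormal_def by auto
    finally show ?thesis .
  qed
  define A3 where "A3 = mat m m (\<lambda>(i,j). B $$ (Suc i, Suc j))"
  have S3: "symm m A3" unfolding symm_def A3_def using Bsym n_def by auto
  from Suc.IH[OF S3] obtain us' ds' where IH: "length us' = m" "length ds' = m" "orthonormal m us'"
    "\<And>i. i<m \<Longrightarrow> A3 *\<^sub>v us'!i = ds'!i \<cdot>\<^sub>v us'!i" by auto
  have usc: "\<And>i. i < m \<Longrightarrow> us'!i \<in> carrier_vec m" using IH unfolding orthonormal_def by auto
  have Bv: "B *\<^sub>v vCons 0 y = vCons 0 (A3 *\<^sub>v y)" if y: "y \<in> carrier_vec m" for y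
  proof (rule eq_vecI)
    show "dim_vec (B *\<^sub>v vCons 0 y) = dim_vec (vCons 0 (A3 *\<^sub>v y))" using B n_def A3_def by simp
    fix i assume "i < dim_vec (vCons 0 (A3 *\<^sub>v y))"
    hence i: "i < n" using n_def A3_def by simp
    have "(B *\<^sub>v vCons 0 y) $ i = row B i \<bullet> vCons 0 y" using B i by simp
    also have "\<dots> = vec m (\<lambda>j. B $$ (i, Suc j)) \<bullet> y"
      using sprod_vCons[of "row B i" m y 0] B i y n_def
      by (metis (no_types, lifting) carrier_matD(2) dim_vec eq_vecI index_row(1) index_vec
          mult_zero_right row_carrier add_0 Suc_less_eq carrier_matD(1))
    also have "\<dots> = vCons 0 (A3 *\<^sub>v y) $ i"
    proof (cases i)
      case 0
      have "vec m (\<lambda>j. B $$ (i, Suc j)) = 0\<^sub>v m"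
      proof (intro eq_vecI)
        fix j assume "j < dim_vec (0\<^sub>v m :: real vec)"
        hence j: "Suc j < n" using n_def by simp
        have "B $$ (0, Suc j) = B $$ (Suc j, 0)" using Bsym[of 0 "Suc j"] j by simp
        also have "\<dots> = 0" using Bi0[OF j] by simp
        finally show "vec m (\<lambda>j. B $$ (i, Suc j)) $ j = (0\<^sub>v m :: real vec) $ j"
          using 0 j n_def by simp
      qed simp
      then show ?thesis using 0 y by simp
    next
      case (Suc i')
      have "vec m (\<lambda>j. B $$ (i, Suc j)) = row A3 i'"
        using Suc i n_def unfolding A3_def by (intro eq_vecI) auto
      then show ?thesis using Suc i n_def A3_def by simp
    qed
    finally show "(B *\<^sub>v vCons 0 y) $ i = vCons 0 (A3 *\<^sub>v y) $ i" .
  qed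
  have MW: "M * W = W * B"
  proof -
    have "W * B = (W * transpose_mat W) * (M * W)" unfolding B_def
      by (rule assoc_mult_mat[symmetric, of _ n n _ n _ n]) (use W M in auto)
    also have "\<dots> = M * W" unfolding WWt using W M by simp
    finally show ?thesis by simp
  qed
  define lift where "lift y = W *\<^sub>v vCons 0 y" for y
  have liftc: "lift y \<in> carrier_vec n" for y unfolding lift_def carrier_vec_def using W by auto
  have WW: "(W *\<^sub>v a) \<bullet> (W *\<^sub>v b) = a \<bullet> b" if "a \<in> carrier_vec n" "b \<in> carrier_vec n" for a b
  proof -
    have "(W *\<^sub>v a) \<bullet> (W *\<^sub>v b) = (transpose_mat W *\<^sub>v (W *\<^sub>v a)) \<bullet> b"
      using transpose_vec_mult_scalar[OF W that(2), of "W *\<^sub>v a"] W that by simp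
    also have "transpose_mat W *\<^sub>v (W *\<^sub>v a) = a"
      using assoc_mult_mat_vec[of "transpose_mat W" n n W n a] W that WtW by simp
    finally show ?thesis .
  qed
  have v_eq: "v = W *\<^sub>v vCons 1 (0\<^sub>v m)"
  proof (rule eq_vecI)
    fix i assume "i < dim_vec (W *\<^sub>v vCons 1 (0\<^sub>v m))"
    hence i: "i < n" using W by simp
    have "(W *\<^sub>v vCons 1 (0\<^sub>v m)) $ i = row W i \<bullet> vCons 1 (0\<^sub>v m)" using W i by simp
    also have "\<dots> = W $$ (i, 0)"
      using sprod_vCons[of "row W i" m "0\<^sub>v m" 1] W i n_def by simp
    also have "\<dots> = v $ i" using ws0 W i n_def ws wsc[of 0] unfolding W_def
      by (simp add: mat_of_cols_def)
    finally show "v $ i = (W *\<^sub>v vCons 1 (0\<^sub>v m)) $ i" by simp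
  qed (use vc W in auto)
  define us where "us = v # map lift us'"
  define ds where "ds = e # ds'"
  have "orthonormal n us"
    unfolding orthonormal_def
  proof (intro conjI allI impI)
    show "set us \<subseteq> carrier_vec n" unfolding us_def using vc liftc by auto
    fix i j assume i: "i < length us" and j: "j < length us"
    have li: "lift y \<bullet> lift z = y \<bullet> z" if "y \<in> carrier_vec m" "z \<in> carrier_vec m" for y z
      unfolding lift_def using WW[of "vCons 0 y" "vCons 0 z"] that n_def by simp
    have lv: "v \<bullet> lift y = 0" if "y \<in> carrier_vec m" for y
      unfolding lift_def v_eq using WW[of "vCons 1 (0\<^sub>v m)" "vCons 0 y"] that n_def by simp
    have vl: "lift y \<bullet> v = 0" if "y \<in> carrier_vec m" for y
      using lv[OF that] comm_scalar_prod[OF liftc[of y] vc] by simp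
    show "us ! i \<bullet> us ! j = (if i = j then 1 else 0)"
    proof (cases i)
      case 0
      then show ?thesis using v1 lv usc j IH(1) unfolding us_def by (cases j) auto
    next
      case (Suc i')
      then show ?thesis using vl li usc i j IH(1,3) unfolding us_def orthonormal_def
        by (cases j) auto
    qed
  qed
  moreover have "M *\<^sub>v us!i = ds!i \<cdot>\<^sub>v us!i" if i: "i < n" for i
  proof (cases i)
    case 0
    then show ?thesis using Mv unfolding us_def ds_def by simp
  next
    case (Suc i')
    have i': "i' < m" using Suc i n_def by simp
    have "M *\<^sub>v lift (us'!i') = W *\<^sub>v (B *\<^sub>v vCons 0 (us'!i'))"
      unfolding lift_def using assoc_mult_mat_vec[of M n n W n] assoc_mult_mat_vec[of W n n B n] M W B
        usc[OF i'] MW by (metis vCons_carrier_vec n_def)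
    also have "\<dots> = W *\<^sub>v vCons 0 (ds'!i' \<cdot>\<^sub>v us'!i')" using Bv[OF usc[OF i']] IH(4)[OF i'] by simp
    also have "vCons 0 (ds'!i' \<cdot>\<^sub>v us'!i') = ds'!i' \<cdot>\<^sub>v vCons 0 (us'!i')"
      by (intro eq_vecI) (auto simp: vec_index_vCons)
    also have "W *\<^sub>v \<dots> = ds'!i' \<cdot>\<^sub>v lift (us'!i')" unfolding lift_def
      using mult_mat_vec[OF W] usc[OF i'] n_def by simp
    finally show ?thesis using Suc i' IH(1) unfolding us_def ds_def by simp
  qed
  moreover have "length us = n" "length ds = n" unfolding us_def ds_def using IH n_def by auto
  ultimately show ?case unfolding n_def by blast
qed

lemma eigen_mat:
  assumes M: "M \<in> carrier_mat n n" and O: "orthonormal n us" and len: "length us = n"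
    and ev: "\<And>i. i<n \<Longrightarrow> M *\<^sub>v us!i = ds!i \<cdot>\<^sub>v us!i"
  shows "M * mat_of_cols n us = mat_of_cols n us * mat n n (\<lambda>(i,j). if i = j then ds!i else 0)"
proof -
  let ?U = "mat_of_cols n us" and ?D = "mat n n (\<lambda>(i,j). if i = j then ds!i else 0)"
  have usc: "\<And>i. i < n \<Longrightarrow> us!i \<in> carrier_vec n" using O len unfolding orthonormal_def by auto
  have U: "?U \<in> carrier_mat n n" using len by auto
  show ?thesis
  proof (rule eq_matI)
    fix i j assume i: "i < dim_row (?U * ?D)" and j: "j < dim_col (?U * ?D)"
    hence i: "i < n" and j: "j < n" using U by auto
    have "(M * ?U) $$ (i,j) = (M *\<^sub>v us!j) $ i" using i j M U len usc[OF j] by simp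
    also have "M *\<^sub>v us!j = ds!j \<cdot>\<^sub>v us!j" by (rule ev[OF j])
    finally have l: "(M * ?U) $$ (i,j) = ds!j * us!j $ i" using i usc[OF j] by simp
    have "(?U * ?D) $$ (i,j) = row ?U i \<bullet> col ?D j" using i j U by simp
    also have "col ?D j = ds!j \<cdot>\<^sub>v unit_vec n j" using j by (intro eq_vecI) auto
    also have "row ?U i \<bullet> (ds!j \<cdot>\<^sub>v unit_vec n j) = ds!j * (row ?U i $ j)"
      using j U i by (subst scalar_prod_smult_right) auto
    also have "row ?U i $ j = us!j $ i" using i j len usc[OF j] U by (simp add: mat_of_cols_def)
    finally show "(M * ?U) $$ (i,j) = (?U * ?D) $$ (i,j)" using l by simp
  qed (use M U in auto)
qed

lemma char_poly_eigen:
  assumes M: "M \<in> carrier_mat n n" and O: "orthonormal n us" and len: "length us = n"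
    and lds: "length ds = n"
    and ev: "\<And>i. i<n \<Longrightarrow> M *\<^sub>v us!i = ds!i \<cdot>\<^sub>v us!i"
  shows "char_poly M = (\<Prod>a\<leftarrow>ds. [:- a, 1:])"
proof -
  let ?U = "mat_of_cols n us" and ?D = "mat n n (\<lambda>(i,j). if i = j then ds!i else 0)"
  have U: "?U \<in> carrier_mat n n" using len by auto
  have D: "?D \<in> carrier_mat n n" by auto
  have UUt: "?U * transpose_mat ?U = 1\<^sub>m n" by (rule orth_mat2[OF O len])
  have UtU: "transpose_mat ?U * ?U = 1\<^sub>m n" by (rule orth_mat[OF O len])
  have MU: "M * ?U = ?U * ?D" by (rule eigen_mat[OF M O len ev])
  have "M = M * (?U * transpose_mat ?U)" using UUt M by simp
  also have "\<dots> = (M * ?U) * transpose_mat ?U" using M U by simp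
  also have "\<dots> = ?U * ?D * transpose_mat ?U" unfolding MU ..
  finally have Meq: "M = ?U * ?D * transpose_mat ?U" .
  have dr: "dim_row M = n" using M by auto
  have "similar_mat_wit M ?D ?U (transpose_mat ?U)"
    unfolding similar_mat_wit_def Let_def dr
  proof (intro conjI)
    show "{M, ?D, ?U, transpose_mat ?U} \<subseteq> carrier_mat n n" using M U D by auto
  qed (fact UUt UtU Meq)+
  hence "similar_mat M ?D" unfolding similar_mat_def by blast
  hence "char_poly M = char_poly ?D" by (rule char_poly_similar)
  also have "\<dots> = (\<Prod>a\<leftarrow>diag_mat ?D. [:- a, 1:])"
    by (rule char_poly_upper_triangular[OF D]) (auto simp: upper_triangular_def)
  also have "diag_mat ?D = ds" using lds unfolding diag_mat_def
    by (intro nth_equalityI) auto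
  finally show ?thesis .
qed

lemma proots_linear_prod: "proots (\<Prod>a\<leftarrow>ds. [:- a, 1:]) = mset (ds :: real list)"
proof (induction ds)
  case (Cons a ds)
  have nz: "(\<Prod>a\<leftarrow>ds. [:- a, 1:]) \<noteq> 0" by (auto simp: prod_list_zero_iff)
  have "proots (\<Prod>a\<leftarrow>a#ds. [:- a, 1:]) = proots ([:- a, 1:] * (\<Prod>a\<leftarrow>ds. [:- a, 1:]))"
    by (simp only: prod_list.Cons list.map)
  also have "\<dots> = proots [:- a, 1:] + proots (\<Prod>a\<leftarrow>ds. [:- a, 1:])"
    by (rule proots_mult) (use nz in auto)
  finally show ?case using Cons by simp
qed simp

lemma spectral_sorted:
  assumes S: "symm n M"
  shows "\<exists>us. length us = n \<and> orthonormal n us \<and> length (eigenvalues_desc M) = n \<and>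
     (\<forall>i<n. M *\<^sub>v us!i = eigenvalues_desc M ! i \<cdot>\<^sub>v us!i) \<and>
     (\<forall>i j. i \<le> j \<longrightarrow> j < n \<longrightarrow> eigenvalues_desc M ! j \<le> eigenvalues_desc M ! i)"
proof -
  have M: "M \<in> carrier_mat n n" using S unfolding symm_def by auto
  obtain us ds where sp: "length us = n" "length ds = n" "orthonormal n us"
    "\<And>i. i<n \<Longrightarrow> M *\<^sub>v us!i = ds!i \<cdot>\<^sub>v us!i" using spectral[OF S] by blast
  have "char_poly M = (\<Prod>a\<leftarrow>ds. [:- a, 1:])" by (rule char_poly_eigen[OF M sp(3,1,2,4)])
  hence lam: "eigenvalues_desc M = rev (sort ds)"
    unfolding eigenvalues_desc_def by (simp add: proots_linear_prod)
  have "mset (eigenvalues_desc M) = mset ds" unfolding lam by simp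
  then obtain p where p: "p permutes {..<length ds}" "permute_list p ds = eigenvalues_desc M"
    by (rule mset_eq_permutation)
  define us2 where "us2 = permute_list p us"
  have pn: "p permutes {..<n}" using p sp by simp
  have pi: "p i < n" if "i < n" for i using permutes_in_image[OF pn, of i] that by simp
  have lamn: "eigenvalues_desc M ! i = ds ! p i" if "i < n" for i
    using p(2)[symmetric] that sp permute_list_nth[OF p(1), of i] by simp
  have us2n: "us2 ! i = us ! p i" if "i < n" for i
    unfolding us2_def using that sp permute_list_nth[of p us i] pn by simp
  have len2: "length us2 = n" unfolding us2_def using sp by simp
  have "orthonormal n us2" unfolding orthonormal_def
  proof (intro conjI allI impI)
    show "set us2 \<subseteq> carrier_vec n" unfolding us2_def using sp(3) pn sp(1)
      by (simp add: set_permute_list orthonormal_def)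
    fix i j assume "i < length us2" "j < length us2"
    hence i: "i < n" and j: "j < n" using len2 by auto
    have "(p i = p j) = (i = j)" using permutes_inj[OF pn] by (auto dest: injD)
    thus "us2 ! i \<bullet> us2 ! j = (if i = j then 1 else 0)"
      using sp(3) pi[OF i] pi[OF j] us2n[OF i] us2n[OF j] sp(1) unfolding orthonormal_def by auto
  qed
  moreover have "length (eigenvalues_desc M) = n" unfolding lam using sp by simp
  moreover have "\<forall>i<n. M *\<^sub>v us2!i = eigenvalues_desc M ! i \<cdot>\<^sub>v us2!i"
    using sp(4) pi us2n lamn by simp
  moreover have "\<forall>i j. i \<le> j \<longrightarrow> j < n \<longrightarrow> eigenvalues_desc M ! j \<le> eigenvalues_desc M ! i"
  proof (intro allI impI)
    fix i j assume "i \<le> j" "j < n"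
    have "sorted_wrt (\<ge>) (eigenvalues_desc M)" unfolding lam by (simp add: sorted_wrt_rev)
    thus "eigenvalues_desc M ! j \<le> eigenvalues_desc M ! i"
      using \<open>i \<le> j\<close> \<open>j < n\<close> \<open>length (eigenvalues_desc M) = n\<close>
      by (metis antisym_conv1 order_refl sorted_wrt_nth_less)
  qed
  ultimately show ?thesis using len2 by blast
qed

lemma weighted_top:
  fixes lam w :: "nat \<Rightarrow> real"
  assumes mono: "\<And>i j. i \<le> j \<Longrightarrow> j < n \<Longrightarrow> lam j \<le> lam i"
   and w: "\<And>j. j < n \<Longrightarrow> 0 \<le> w j \<and> w j \<le> 1"
   and sw: "(\<Sum>j<n. w j) = real k" and kn: "k \<le> n" and k1: "1 \<le> k"
  shows "(\<Sum>j<n. lam j * w j) \<le> (\<Sum>j<k. lam j)"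
proof -
  define c where "c = lam (k - 1)"
  define g where "g j = c * w j + (if j < k then lam j - c else 0)" for j
  have fg: "lam j * w j \<le> g j" if j: "j < n" for j
  proof (cases "j < k")
    case True
    have "lam j \<ge> c" unfolding c_def using True kn by (intro mono) auto
    moreover have "w j \<le> 1" using w[OF j] by auto
    ultimately have "(lam j - c) * (w j - 1) \<le> 0" by (simp add: mult_nonneg_nonpos)
    thus ?thesis unfolding g_def using True by (simp add: algebra_simps)
  next
    case False
    have "lam j \<le> c" unfolding c_def using False j k1 by (intro mono) auto
    moreover have "w j \<ge> 0" using w[OF j] by auto
    ultimately have "lam j * w j \<le> c * w j" by (simp add: mult_right_mono)
    thus ?thesis unfolding g_def using False by simp
  qed
  have "(\<Sum>j<n. lam j * w j) \<le> (\<Sum>j<n. g j)" by (rule sum_mono) (use fg in auto)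
  also have "(\<Sum>j<n. g j) = c * (\<Sum>j<n. w j) + (\<Sum>j<n. if j < k then lam j - c else 0)"
    unfolding g_def by (simp add: sum.distrib sum_distrib_left)
  also have "(\<Sum>j<n. if j < k then lam j - c else 0) = (\<Sum>j<k. lam j - c)"
  proof -
    have "{..<n} \<inter> {j. j < k} = {..<k}" using kn by auto
    thus ?thesis by (simp add: sum.If_cases)
  qed
  also have "\<dots> = (\<Sum>j<k. lam j) - real k * c" by (simp add: sum_subtractf)
  finally show ?thesis unfolding sw by simp
qed

lemma orth_pres:
  fixes U :: "real mat"
  assumes U: "U \<in> carrier_mat n k" and UtU: "transpose_mat U * U = 1\<^sub>m k"
    and a: "a \<in> carrier_vec k" and b: "b \<in> carrier_vec k"
  shows "(U *\<^sub>v a) \<bullet> (U *\<^sub>v b) = a \<bullet> b"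
proof -
  have "(U *\<^sub>v a) \<bullet> (U *\<^sub>v b) = (transpose_mat U *\<^sub>v (U *\<^sub>v a)) \<bullet> b"
    using transpose_vec_mult_scalar[OF U b, of "U *\<^sub>v a"] U a by simp
  also have "transpose_mat U *\<^sub>v (U *\<^sub>v a) = a"
    using assoc_mult_mat_vec[of "transpose_mat U" k n U k a] U a UtU by simp
  finally show ?thesis .
qed

lemma sq_expand:
  fixes z u :: "real vec"
  assumes "z \<in> carrier_vec n" "u \<in> carrier_vec n"
  shows "z \<bullet> z - 2 * (z \<bullet> u) + u \<bullet> u \<ge> 0"
proof -
  have e: "\<And>i. (z$i - u$i)^2 = z$i*z$i - 2*(z$i*u$i) + u$i*u$i"
    by (simp add: power2_eq_square algebra_simps)
  have "(\<Sum>i<n. (z$i - u$i)^2) = (\<Sum>i<n. z$i*z$i) - (\<Sum>i<n. 2*(z$i*u$i)) + (\<Sum>i<n. u$i*u$i)"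
    unfolding e by (simp only: sum.distrib sum_subtractf)
  also have "\<dots> = z \<bullet> z - 2 * (z \<bullet> u) + u \<bullet> u"
    using assms by (simp add: scalar_prod_def lessThan_atLeast0 sum_distrib_left)
  finally have "z \<bullet> z - 2 * (z \<bullet> u) + u \<bullet> u = (\<Sum>i<n. (z$i - u$i)^2)" by simp
  also have "\<dots> \<ge> 0" by (rule sum_nonneg) simp
  finally show ?thesis .
qed

lemma bessel:
  assumes O: "orthonormal n ys" and k: "length ys = k" and u: "u \<in> carrier_vec n"
  shows "(\<Sum>i<k. (ys!i \<bullet> u)^2) \<le> u \<bullet> u"
proof -
  define Y where "Y = mat_of_cols n ys"
  have Y: "Y \<in> carrier_mat n k" unfolding Y_def using k by auto
  have YtY: "transpose_mat Y * Y = 1\<^sub>m k" unfolding Y_def by (rule orth_mat[OF O k])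
  have ysc: "\<And>i. i < k \<Longrightarrow> ys!i \<in> carrier_vec n" using O k unfolding orthonormal_def by auto
  define c where "c = transpose_mat Y *\<^sub>v u"
  have c: "c \<in> carrier_vec k" unfolding c_def carrier_vec_def using Y by auto
  have ci: "c $ i = ys!i \<bullet> u" if "i < k" for i
    unfolding c_def Y_def using that k ysc[OF that] u by simp
  define z where "z = Y *\<^sub>v c"
  have z: "z \<in> carrier_vec n" unfolding z_def carrier_vec_def using Y by auto
  have zz: "z \<bullet> z = c \<bullet> c" unfolding z_def by (rule orth_pres[OF Y YtY c c])
  have "u \<bullet> z = c \<bullet> c"
    unfolding z_def c_def using transpose_vec_mult_scalar[OF Y c u] c_def by simp
  hence zu: "z \<bullet> u = c \<bullet> c" using comm_scalar_prod[OF z u] by simp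
  have "c \<bullet> c = (\<Sum>i<k. c$i * c$i)" using c by (simp add: scalar_prod_def lessThan_atLeast0)
  also have "\<dots> = (\<Sum>i<k. (ys!i \<bullet> u)^2)" by (intro sum.cong refl) (simp add: ci power2_eq_square)
  finally have cc: "c \<bullet> c = (\<Sum>i<k. (ys!i \<bullet> u)^2)" .
  show ?thesis using sq_expand[OF z u] zz zu cc by simp
qed

lemma quad_expand:
  assumes M: "M \<in> carrier_mat n n" and O: "orthonormal n us" and len: "length us = n"
    and ev: "\<And>i. i<n \<Longrightarrow> M *\<^sub>v us!i = lam!i \<cdot>\<^sub>v us!i"
    and y: "y \<in> carrier_vec n"
  shows "y \<bullet> (M *\<^sub>v y) = (\<Sum>j<n. lam!j * (us!j \<bullet> y)^2)"
    and "y \<bullet> y = (\<Sum>j<n. (us!j \<bullet> y)^2)"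
proof -
  define U where "U = mat_of_cols n us"
  define D where "D = mat n n (\<lambda>(i,j). if i = j then lam!i else (0::real))"
  have U: "U \<in> carrier_mat n n" unfolding U_def using len by auto
  have D: "D \<in> carrier_mat n n" unfolding D_def by auto
  have UUt: "U * transpose_mat U = 1\<^sub>m n" unfolding U_def by (rule orth_mat2[OF O len])
  have UtU: "transpose_mat U * U = 1\<^sub>m n" unfolding U_def by (rule orth_mat[OF O len])
  have MU: "M * U = U * D" unfolding U_def D_def by (rule eigen_mat[OF M O len ev])
  have usc: "\<And>i. i < n \<Longrightarrow> us!i \<in> carrier_vec n" using O len unfolding orthonormal_def by auto
  define c where "c = transpose_mat U *\<^sub>v y"
  have c: "c \<in> carrier_vec n" unfolding c_def carrier_vec_def using U by auto
  have ci: "c $ j = us!j \<bullet> y" if "j < n" for j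
    unfolding c_def U_def using that len usc[OF that] y by simp
  have yc: "y = U *\<^sub>v c"
    unfolding c_def using assoc_mult_mat_vec[of U n n "transpose_mat U" n y] U y UUt by simp
  have Dc: "D *\<^sub>v c = vec n (\<lambda>j. lam!j * c$j)"
  proof (rule eq_vecI)
    fix j assume "j < dim_vec (vec n (\<lambda>j. lam!j * c$j))"
    hence j: "j < n" by simp
    have "row D j = lam!j \<cdot>\<^sub>v unit_vec n j" unfolding D_def using j by (intro eq_vecI) auto
    hence "(D *\<^sub>v c) $ j = (lam!j \<cdot>\<^sub>v unit_vec n j) \<bullet> c" using D j by simp
    also have "\<dots> = lam!j * c$j" using j c by (subst scalar_prod_smult_left) auto
    finally show "(D *\<^sub>v c) $ j = vec n (\<lambda>j. lam!j * c$j) $ j" using j by simp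
  qed (use D in auto)
  have "M *\<^sub>v y = (M * U) *\<^sub>v c" unfolding yc using M U c by simp
  also have "\<dots> = U *\<^sub>v (D *\<^sub>v c)" unfolding MU using U D c by simp
  finally have My: "M *\<^sub>v y = U *\<^sub>v (D *\<^sub>v c)" .
  have "y \<bullet> (M *\<^sub>v y) = c \<bullet> (D *\<^sub>v c)" unfolding My
    by (subst (1) yc, rule orth_pres[OF U UtU c]) (use D c in auto)
  also have "\<dots> = (\<Sum>j<n. c$j * (lam!j * c$j))" unfolding Dc
    using c by (simp add: scalar_prod_def lessThan_atLeast0)
  also have "\<dots> = (\<Sum>j<n. lam!j * (us!j \<bullet> y)^2)"
    by (intro sum.cong refl) (simp add: ci power2_eq_square)
  finally show "y \<bullet> (M *\<^sub>v y) = (\<Sum>j<n. lam!j * (us!j \<bullet> y)^2)" .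
  have "y \<bullet> y = c \<bullet> c" by (subst (1 2) yc, rule orth_pres[OF U UtU c c])
  also have "\<dots> = (\<Sum>j<n. c$j * c$j)" using c by (simp add: scalar_prod_def lessThan_atLeast0)
  also have "\<dots> = (\<Sum>j<n. (us!j \<bullet> y)^2)"
    by (intro sum.cong refl) (simp add: ci power2_eq_square)
  finally show "y \<bullet> y = (\<Sum>j<n. (us!j \<bullet> y)^2)" .
qed

lemma sum_list_take: "k \<le> length xs \<Longrightarrow> sum_list (take k xs) = (\<Sum>j<k. xs!j)"
  by (simp add: sum_list_sum_nth lessThan_atLeast0 min_def)

lemma kyfan_orth:
  assumes S: "symm n M" and O: "orthonormal n ys" and k: "length ys = k"
  shows "(\<Sum>i<k. ys!i \<bullet> (M *\<^sub>v ys!i)) \<le> S_k k M"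
proof (cases "k = 0")
  case True
  then show ?thesis unfolding S_k_def by simp
next
  case False
  have M: "M \<in> carrier_mat n n" using S unfolding symm_def by auto
  obtain us where sp0: "length us = n" "orthonormal n us" "length (eigenvalues_desc M) = n"
    "\<forall>i<n. M *\<^sub>v us!i = eigenvalues_desc M ! i \<cdot>\<^sub>v us!i"
    "\<forall>i j. i \<le> j \<longrightarrow> j < n \<longrightarrow> eigenvalues_desc M ! j \<le> eigenvalues_desc M ! i"
    using spectral_sorted[OF S] by (elim exE conjE) (rule that)
  have sp4: "\<And>i. i<n \<Longrightarrow> M *\<^sub>v us!i = eigenvalues_desc M ! i \<cdot>\<^sub>v us!i" using sp0(4) by blast
  have sp5: "\<And>i j. i \<le> j \<Longrightarrow> j < n \<Longrightarrow> eigenvalues_desc M ! j \<le> eigenvalues_desc M ! i"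
    using sp0(5) by blast
  note sp = sp0(1-3) sp4 sp5
  define lam where "lam = eigenvalues_desc M"
  have ysc: "\<And>i. i < k \<Longrightarrow> ys!i \<in> carrier_vec n" using O k unfolding orthonormal_def by auto
  have usc: "\<And>i. i < n \<Longrightarrow> us!i \<in> carrier_vec n" using sp unfolding orthonormal_def by auto
  define w where "w j = (\<Sum>i<k. (us!j \<bullet> ys!i)^2)" for j
  have "(\<Sum>i<k. ys!i \<bullet> (M *\<^sub>v ys!i)) = (\<Sum>i<k. \<Sum>j<n. lam!j * (us!j \<bullet> ys!i)^2)"
    unfolding lam_def by (intro sum.cong refl quad_expand(1)[OF M sp(2,1) sp(4) ysc]) auto
  also have "\<dots> = (\<Sum>j<n. lam!j * w j)" unfolding w_def
    by (subst sum.swap) (simp add: sum_distrib_left)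
  finally have lhs: "(\<Sum>i<k. ys!i \<bullet> (M *\<^sub>v ys!i)) = (\<Sum>j<n. lam!j * w j)" .
  have w01: "0 \<le> w j \<and> w j \<le> 1" if j: "j < n" for j
  proof
    show "0 \<le> w j" unfolding w_def by (rule sum_nonneg) simp
    have "w j = (\<Sum>i<k. (ys!i \<bullet> us!j)^2)" unfolding w_def
    proof (intro sum.cong refl)
      fix i assume "i \<in> {..<k}"
      hence i: "i < k" by simp
      show "(us!j \<bullet> ys!i)^2 = (ys!i \<bullet> us!j)^2" using comm_scalar_prod[OF usc[OF j] ysc[OF i]] by simp
    qed
    also have "\<dots> \<le> us!j \<bullet> us!j" by (rule bessel[OF O k usc[OF j]])
    also have "\<dots> = 1" using sp(1,2) j unfolding orthonormal_def by auto
    finally show "w j \<le> 1" .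
  qed
  have "(\<Sum>j<n. w j) = (\<Sum>i<k. \<Sum>j<n. (us!j \<bullet> ys!i)^2)" unfolding w_def by (rule sum.swap)
  also have "\<dots> = (\<Sum>i<k. ys!i \<bullet> ys!i)"
    by (intro sum.cong refl quad_expand(2)[OF M sp(2,1) sp(4) ysc, symmetric]) auto
  also have "\<dots> = (\<Sum>i<k. 1)" using O k unfolding orthonormal_def by (intro sum.cong refl) auto
  finally have sw: "(\<Sum>j<n. w j) = real k" by simp
  have "real k \<le> (\<Sum>j<n. 1)" unfolding sw[symmetric] by (rule sum_mono) (use w01 in auto)
  hence kn: "k \<le> n" by simp
  have "(\<Sum>j<n. lam!j * w j) \<le> (\<Sum>j<k. lam!j)"
  proof (rule weighted_top[of n "\<lambda>j. lam!j" w k])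
    show "\<And>i j. i \<le> j \<Longrightarrow> j < n \<Longrightarrow> lam ! j \<le> lam ! i" unfolding lam_def by (rule sp(5))
    show "\<And>j. j < n \<Longrightarrow> 0 \<le> w j \<and> w j \<le> 1" by (rule w01)
    show "(\<Sum>j<n. w j) = real k" by (rule sw)
    show "k \<le> n" by (rule kn)
    show "1 \<le> k" using False by simp
  qed
  also have "\<dots> = S_k k M" unfolding S_k_def lam_def using sum_list_take[of k "eigenvalues_desc M"] kn sp(3)
    by simp
  finally show ?thesis using lhs by simp
qed

lemma kyfan:
  assumes S: "symm n M" and xs: "set xs \<subseteq> carrier_vec n"
    and orth: "\<And>i j. i < length xs \<Longrightarrow> j < length xs \<Longrightarrow> i \<noteq> j \<Longrightarrow> xs!i \<bullet> xs!j = 0"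
    and nz: "\<And>i. i < length xs \<Longrightarrow> xs!i \<noteq> 0\<^sub>v n"
  shows "(\<Sum>i<length xs. (xs!i \<bullet> (M *\<^sub>v xs!i)) / (xs!i \<bullet> xs!i)) \<le> S_k (length xs) M"
proof -
  have M: "M \<in> carrier_mat n n" using S unfolding symm_def by auto
  have xc: "\<And>i. i < length xs \<Longrightarrow> xs!i \<in> carrier_vec n" using xs by auto
  have pos: "xs!i \<bullet> xs!i > 0" if "i < length xs" for i
    using conjugate_square_greater_0_vec[OF xc[OF that]] nz[OF that] by simp
  define ys where "ys = map (\<lambda>x. (1 / sqrt (x \<bullet> x)) \<cdot>\<^sub>v x) xs"
  have O: "orthonormal n ys" unfolding orthonormal_def
  proof (intro conjI allI impI)
    show "set ys \<subseteq> carrier_vec n" unfolding ys_def using xs by auto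
    fix i j assume "i < length ys" "j < length ys"
    hence i: "i < length xs" and j: "j < length xs" unfolding ys_def by auto
    show "ys!i \<bullet> ys!j = (if i = j then 1 else 0)"
      using i j xc[OF i] xc[OF j] orth[OF i j] pos[OF i] unfolding ys_def
      by (auto simp: field_simps)
  qed
  have "(\<Sum>i<length xs. (xs!i \<bullet> (M *\<^sub>v xs!i)) / (xs!i \<bullet> xs!i)) = (\<Sum>i<length ys. ys!i \<bullet> (M *\<^sub>v ys!i))"
    unfolding ys_def
  proof (simp, intro sum.cong refl)
    fix i assume "i \<in> {..<length xs}"
    hence i: "i < length xs" by simp
    show "(xs!i \<bullet> (M *\<^sub>v xs!i)) / (xs!i \<bullet> xs!i) =
      (1 / sqrt (xs!i \<bullet> xs!i) \<cdot>\<^sub>v xs!i) \<bullet> (M *\<^sub>v (1 / sqrt (xs!i \<bullet> xs!i) \<cdot>\<^sub>v xs!i))"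
      using mult_mat_vec[OF M xc[OF i]] xc[OF i] M pos[OF i] by (simp add: field_simps)
  qed
  also have "\<dots> \<le> S_k (length ys) M" by (rule kyfan_orth[OF S O refl])
  finally show ?thesis unfolding ys_def by simp
qed

lemma A_alpha_carrier: "A_alpha \<alpha> n E \<in> carrier_mat n n"
  unfolding A_alpha_def deg_mat_def adj_mat_def by auto

lemma A_alpha_entry:
  assumes "i < n" "j < n"
  shows "A_alpha \<alpha> n E $$ (i,j) =
    (if i = j then \<alpha> * real (degree n E i) else 0) + (1 - \<alpha>) * (if E i j then 1 else 0)"
  using assms unfolding A_alpha_def deg_mat_def adj_mat_def by auto

lemma A_alpha_symm:
  assumes "simple_graph n E" shows "symm n (A_alpha \<alpha> n E)"
  unfolding symm_def using A_alpha_carrier A_alpha_entry assms unfolding simple_graph_def by auto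

definition qadj :: "nat \<Rightarrow> (nat \<Rightarrow> nat \<Rightarrow> bool) \<Rightarrow> real vec \<Rightarrow> real" where
  "qadj n E x = (\<Sum>p<n. \<Sum>q<n. (if E p q then 1 else 0) * (x$p * x$q))"

lemma A_alpha_quad:
  assumes reg: "regular n E r" and x: "x \<in> carrier_vec n"
  shows "x \<bullet> (A_alpha \<alpha> n E *\<^sub>v x) = \<alpha> * real r * (x \<bullet> x) + (1 - \<alpha>) * qadj n E x"
proof -
  have row: "(A_alpha \<alpha> n E *\<^sub>v x) $ p = \<alpha> * real r * x$p + (1 - \<alpha>) * (\<Sum>q<n. (if E p q then 1 else 0) * x$q)"
    if p: "p < n" for p
  proof -
    have "(A_alpha \<alpha> n E *\<^sub>v x) $ p = (\<Sum>q<n. A_alpha \<alpha> n E $$ (p,q) * x$q)"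
      using p x A_alpha_carrier[of \<alpha> n E] by (simp add: scalar_prod_def lessThan_atLeast0)
    also have "\<dots> = (\<Sum>q<n. (if p = q then \<alpha> * real r * x$q else 0) + (1 - \<alpha>) * ((if E p q then 1 else 0) * x$q))"
      using p reg unfolding regular_def by (intro sum.cong refl) (auto simp: A_alpha_entry algebra_simps)
    also have "\<dots> = \<alpha> * real r * x$p + (1 - \<alpha>) * (\<Sum>q<n. (if E p q then 1 else 0) * x$q)"
      using p by (simp add: sum.distrib sum_distrib_left)
    finally show ?thesis .
  qed
  have "x \<bullet> (A_alpha \<alpha> n E *\<^sub>v x) = (\<Sum>p<n. x$p * (A_alpha \<alpha> n E *\<^sub>v x) $ p)"
    using x A_alpha_carrier[of \<alpha> n E] by (simp add: scalar_prod_def lessThan_atLeast0)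
  also have "\<dots> = (\<Sum>p<n. \<alpha> * real r * (x$p * x$p) + (1 - \<alpha>) * (\<Sum>q<n. (if E p q then 1 else 0) * (x$p * x$q)))"
    by (intro sum.cong refl) (simp add: row algebra_simps sum_distrib_left)
  also have "\<dots> = \<alpha> * real r * (x \<bullet> x) + (1 - \<alpha>) * qadj n E x"
    using x unfolding qadj_def by (simp add: sum.distrib sum_distrib_left scalar_prod_def lessThan_atLeast0)
  finally show ?thesis .
qed

definition vecof :: "nat \<Rightarrow> nat list \<Rightarrow> (nat \<Rightarrow> real) \<Rightarrow> real vec" where
  "vecof n cs s = vec n (\<lambda>p. \<Sum>t<length cs. if cs!t = p then s t else 0)"

lemma vecof_carrier[simp]: "vecof n cs s \<in> carrier_vec n" unfolding vecof_def by simp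

lemma vecof_sum:
  assumes cs: "set cs \<subseteq> {..<n}"
  shows "(\<Sum>p<n. vecof n cs s $ p * h p) = (\<Sum>t<length cs. s t * h (cs!t))"
proof -
  have "(\<Sum>p<n. vecof n cs s $ p * h p) = (\<Sum>p<n. \<Sum>t<length cs. if cs!t = p then s t * h p else 0)"
    unfolding vecof_def
    by (intro sum.cong refl) (simp add: sum_distrib_right, intro sum.cong refl, simp)
  also have "\<dots> = (\<Sum>t<length cs. \<Sum>p<n. if cs!t = p then s t * h p else 0)" by (rule sum.swap)
  also have "\<dots> = (\<Sum>t<length cs. s t * h (cs!t))"
  proof (intro sum.cong refl)
    fix t assume "t \<in> {..<length cs}"
    hence "cs!t < n" using cs nth_mem by fastforce
    thus "(\<Sum>p<n. if cs!t = p then s t * h p else 0) = s t * h (cs!t)"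
      by (simp add: sum.delta)
  qed
  finally show ?thesis .
qed

lemma vecof_nth:
  assumes cs: "set cs \<subseteq> {..<n}" and d: "distinct cs" and t: "t < length cs"
  shows "vecof n cs s $ (cs!t) = s t"
proof -
  have lt: "cs!t < n" using cs t nth_mem by fastforce
  have "vecof n cs s $ (cs!t) = (\<Sum>t'<length cs. if cs!t' = cs!t then s t' else 0)"
    unfolding vecof_def using lt by simp
  also have "\<dots> = (\<Sum>t'<length cs. if t' = t then s t' else 0)"
    by (intro sum.cong refl) (use d t in \<open>auto simp: nth_eq_iff_index_eq\<close>)
  also have "\<dots> = s t" using t by (simp add: sum.delta)
  finally show ?thesis .
qed

lemma vecof_out:
  assumes "p \<notin> set cs" "p < n"
  shows "vecof n cs s $ p = 0"
  unfolding vecof_def using assms by (auto intro!: sum.neutral)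

lemma vecof_sprod:
  assumes cs: "set cs \<subseteq> {..<n}" and that: "y \<in> carrier_vec n"
  shows "vecof n cs s \<bullet> y = (\<Sum>t<length cs. s t * y $ (cs!t))"
proof -
  have "vecof n cs s \<bullet> y = (\<Sum>p<n. vecof n cs s $ p * y $ p)"
    using that by (simp add: scalar_prod_def lessThan_atLeast0)
  also have "\<dots> = (\<Sum>t<length cs. s t * y $ (cs!t))" by (rule vecof_sum[OF cs])
  finally show ?thesis .
qed

lemma vecof_orth:
  assumes cs: "set cs \<subseteq> {..<n}" and cs': "set cs' \<subseteq> {..<n}" and dj: "set cs \<inter> set cs' = {}"
  shows "vecof n cs s \<bullet> vecof n cs' s' = 0"
  unfolding vecof_sprod[OF cs vecof_carrier]
proof (rule sum.neutral, intro ballI)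
  fix t assume "t \<in> {..<length cs}"
  hence "cs!t \<in> set cs" by simp
  hence "cs!t \<notin> set cs'" "cs!t < n" using dj cs by auto
  thus "s t * vecof n cs' s' $ (cs!t) = 0" by (simp add: vecof_out)
qed

lemma vecof_norm:
  assumes cs: "set cs \<subseteq> {..<n}" and d: "distinct cs"
  shows "vecof n cs s \<bullet> vecof n cs s = (\<Sum>t<length cs. s t * s t)"
  unfolding vecof_sprod[OF cs vecof_carrier] by (intro sum.cong refl) (use vecof_nth[OF cs d] in auto)

lemma vecof_qadj:
  assumes cs: "set cs \<subseteq> {..<n}"
  shows "qadj n E (vecof n cs s) =
    (\<Sum>t<length cs. \<Sum>t'<length cs. (if E (cs!t) (cs!t') then 1 else 0) * (s t * s t'))"
proof -
  let ?x = "vecof n cs s"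
  have "qadj n E ?x = (\<Sum>p<n. ?x $ p * (\<Sum>q<n. ?x $ q * (if E p q then 1 else 0)))"
    unfolding qadj_def by (intro sum.cong refl) (simp add: sum_distrib_left mult_ac)
  also have "\<dots> = (\<Sum>p<n. ?x $ p * (\<Sum>t'<length cs. s t' * (if E p (cs!t') then 1 else 0)))"
    by (intro sum.cong refl) (simp add: vecof_sum[OF cs])
  also have "\<dots> = (\<Sum>t<length cs. s t * (\<Sum>t'<length cs. s t' * (if E (cs!t) (cs!t') then 1 else 0)))"
    by (rule vecof_sum[OF cs])
  also have "\<dots> = (\<Sum>t<length cs. \<Sum>t'<length cs. (if E (cs!t) (cs!t') then 1 else 0) * (s t * s t'))"
    by (intro sum.cong refl) (simp add: sum_distrib_left mult_ac)
  finally show ?thesis .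
qed

lemma sum_two_pts:
  fixes f :: "nat \<Rightarrow> real"
  assumes "A \<noteq> B" "A < g" "B < g"
  shows "(\<Sum>t<g. if t = A \<or> t = B then f t else 0) = f A + f B"
proof -
  have "{..<g} \<inter> {t. t = A \<or> t = B} = {A, B}" using assms by auto
  thus ?thesis using assms by (simp add: sum.If_cases)
qed

lemma sum_two_pts2:
  assumes "A \<noteq> B" "A < g" "B < g"
  shows "(\<Sum>t<g. if t = A \<or> t = B then (c::real) else d) = 2 * c + (real g - 2) * d"
proof -
  have "(\<Sum>t<g. if t = A \<or> t = B then c else d) = (\<Sum>t<g. d + (if t = A \<or> t = B then c - d else 0))"
    by (intro sum.cong refl) auto
  also have "\<dots> = real g * d + ((c - d) + (c - d))"
    by (simp add: sum.distrib sum_two_pts[OF assms, of "\<lambda>_. c - d"])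
  finally show ?thesis by (simp add: algebra_simps)
qed

lemma degree_sum:
  assumes "i < n"
  shows "(\<Sum>j<n. (if E i j then 1 else 0) :: real) = real (degree n E i)"
proof -
  have "{..<n} \<inter> {j. E i j} = {j. j < n \<and> E i j}" by auto
  thus ?thesis unfolding degree_def by (simp add: sum.If_cases)
qed

definition ones :: "nat \<Rightarrow> real vec" where "ones n = vecof n [0..<n] (\<lambda>_. 1)"

lemma ones_props:
  assumes reg: "regular n E r" and n: "n \<ge> 1"
  shows "ones n \<bullet> ones n = real n" "ones n \<noteq> 0\<^sub>v n"
    "ones n \<bullet> (A_alpha \<alpha> n E *\<^sub>v ones n) / (ones n \<bullet> ones n) = real r"
proof -
  have cs: "set [0..<n] \<subseteq> {..<n}" by auto
  show nn: "ones n \<bullet> ones n = real n" unfolding ones_def vecof_norm[OF cs distinct_upt] by simp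
  thus "ones n \<noteq> 0\<^sub>v n" using n by auto
  have "qadj n E (ones n) = (\<Sum>t<n. \<Sum>t'<n. (if E t t' then 1 else 0))"
    unfolding ones_def vecof_qadj[OF cs] by simp
  also have "\<dots> = (\<Sum>t<n. real r)" using reg unfolding regular_def
    by (intro sum.cong refl) (simp add: degree_sum)
  finally have q: "qadj n E (ones n) = real n * real r" by simp
  show "ones n \<bullet> (A_alpha \<alpha> n E *\<^sub>v ones n) / (ones n \<bullet> ones n) = real r"
    unfolding A_alpha_quad[OF reg vecof_carrier[of n "[0..<n]" "\<lambda>_. 1", folded ones_def]] q nn
    using n by (simp add: field_simps)
qed

lemma ones_nth: assumes "p < n" shows "ones n $ p = 1"
proof -
  have "ones n $ ([0..<n] ! p) = 1" unfolding ones_def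
    by (rule vecof_nth) (use assms in auto)
  thus ?thesis using assms by simp
qed

lemma ones_orth:
  assumes cs: "set cs \<subseteq> {..<n}"
  shows "ones n \<bullet> vecof n cs s = (\<Sum>t<length cs. s t)"
proof -
  have "ones n \<bullet> vecof n cs s = vecof n cs s \<bullet> ones n"
    by (rule comm_scalar_prod[of _ n]) (auto simp: ones_def)
  also have "\<dots> = (\<Sum>t<length cs. s t)" unfolding vecof_sprod[OF cs vecof_carrier[of n "[0..<n]" "\<lambda>_. 1", folded ones_def]]
  proof (intro sum.cong refl)
    fix t assume "t \<in> {..<length cs}"
    hence "cs!t < n" using cs nth_mem by fastforce
    thus "s t * ones n $ (cs ! t) = s t" by (simp add: ones_nth)
  qed
  finally show ?thesis .
qed

definition pairv :: "nat \<Rightarrow> nat \<Rightarrow> nat \<Rightarrow> real vec" where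
  "pairv n a b = vecof n [a, b] (\<lambda>t. if t = 0 then 1 else -1)"

lemma pair_props:
  assumes reg: "regular n E r" and G: "simple_graph n E" and a: "a < n" and b: "b < n"
    and ab: "a \<noteq> b" and E: "E a b"
  shows "pairv n a b \<bullet> pairv n a b = 2" "pairv n a b \<noteq> 0\<^sub>v n"
    "pairv n a b \<bullet> (A_alpha \<alpha> n E *\<^sub>v pairv n a b) / (pairv n a b \<bullet> pairv n a b) = \<alpha> * real r - (1 - \<alpha>)"
    "ones n \<bullet> pairv n a b = 0"
proof -
  have cs: "set [a, b] \<subseteq> {..<n}" using a b by auto
  have d: "distinct [a, b]" using ab by auto
  have two: "{..<2::nat} = {0, 1}" by auto
  show nn: "pairv n a b \<bullet> pairv n a b = 2" unfolding pairv_def vecof_norm[OF cs d] by (simp add: two)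
  thus "pairv n a b \<noteq> 0\<^sub>v n" by auto
  have Es: "E b a" "\<not> E a a" "\<not> E b b" using G E a b unfolding simple_graph_def by auto
  have q: "qadj n E (pairv n a b) = -2" unfolding pairv_def vecof_qadj[OF cs] using E Es
    by (simp add: two)
  show "pairv n a b \<bullet> (A_alpha \<alpha> n E *\<^sub>v pairv n a b) / (pairv n a b \<bullet> pairv n a b) = \<alpha> * real r - (1 - \<alpha>)"
  proof -
    have "pairv n a b \<bullet> (A_alpha \<alpha> n E *\<^sub>v pairv n a b) = \<alpha> * real r * (pairv n a b \<bullet> pairv n a b) + (1 - \<alpha>) * qadj n E (pairv n a b)"
      by (rule A_alpha_quad[OF reg]) (simp add: pairv_def)
    thus ?thesis unfolding q nn by (simp add: field_simps)
  qed
  show "ones n \<bullet> pairv n a b = 0" unfolding pairv_def ones_orth[OF cs] by (simp add: two)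
qed

definition cycv :: "nat \<Rightarrow> nat list \<Rightarrow> real vec" where
  "cycv n cs = vecof n cs (\<lambda>t. if t < length cs div 2 then 1 else -1)"

lemma cyc_adj_iff:
  fixes g t t' :: nat
  assumes g: "g \<ge> 3" and t: "t < g" and t': "t' < g"
  shows "(t' = (t + 1) mod g \<or> t = (t' + 1) mod g) \<longleftrightarrow>
         (t' = (if t + 1 = g then 0 else t + 1) \<or> t' = (if t = 0 then g - 1 else t - 1))"
proof -
  have m1: "(t + 1) mod g = (if t + 1 = g then 0 else t + 1)" using t by auto
  have m2: "(t' + 1) mod g = (if t' + 1 = g then 0 else t' + 1)" using t' by auto
  show ?thesis unfolding m1 m2 using t t' g by auto
qed

lemma cyc_sum_pts:
  fixes s :: "nat \<Rightarrow> real"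
  assumes g: "g \<ge> 3" and t: "t < g"
  shows "(\<Sum>t'<g. (if t' = (t + 1) mod g \<or> t = (t' + 1) mod g then 1 else 0) * (s t * s t'))
    = s t * s (if t + 1 = g then 0 else t + 1) + s t * s (if t = 0 then g - 1 else t - 1)"
proof -
  let ?A = "if t + 1 = g then 0 else t + 1" and ?B = "if t = 0 then g - 1 else t - 1"
  have "(\<Sum>t'<g. (if t' = (t + 1) mod g \<or> t = (t' + 1) mod g then 1 else 0) * (s t * s t'))
      = (\<Sum>t'<g. if t' = ?A \<or> t' = ?B then s t * s t' else 0)"
    by (intro sum.cong refl) (use cyc_adj_iff[OF g t] in auto)
  also have "\<dots> = s t * s ?A + s t * s ?B"
    by (rule sum_two_pts) (use g t in auto)
  finally show ?thesis .
qed

lemma cyc_props: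
  assumes reg: "regular n E r" and C: "induced_cycle n E cs" and ev: "even (length cs)"
  shows "cycv n cs \<bullet> cycv n cs = real (length cs)" "cycv n cs \<noteq> 0\<^sub>v n"
    "cycv n cs \<bullet> (A_alpha \<alpha> n E *\<^sub>v cycv n cs) / (cycv n cs \<bullet> cycv n cs)
       = \<alpha> * real r + 2 * (1 - \<alpha>) * (1 - 4 / real (length cs))"
    "ones n \<bullet> cycv n cs = 0"
proof -
  define g where "g = length cs"
  define h where "h = g div 2"
  define s where "s t = (if t < h then 1 else -1 :: real)" for t
  have g3: "g \<ge> 3" and d: "distinct cs" and cs: "set cs \<subseteq> {..<n}"
    and adj: "\<And>i j. i < g \<Longrightarrow> j < g \<Longrightarrow> E (cs!i) (cs!j) \<longleftrightarrow> (j = (i + 1) mod g \<or> i = (j + 1) mod g)"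
    using C unfolding induced_cycle_def g_def Let_def by auto
  have gh: "g = 2 * h" using ev unfolding h_def g_def by auto
  have h2: "h \<ge> 2" using g3 gh by auto
  have cv: "cycv n cs = vecof n cs s" unfolding cycv_def s_def h_def g_def ..
  have ss: "s t * s t = 1" for t unfolding s_def by simp
  show nn: "cycv n cs \<bullet> cycv n cs = real (length cs)" unfolding cv vecof_norm[OF cs d] ss
    by simp
  thus "cycv n cs \<noteq> 0\<^sub>v n" using g3 unfolding g_def by auto
  have "ones n \<bullet> cycv n cs = (\<Sum>t<g. s t)" unfolding cv ones_orth[OF cs] g_def ..
  also have "\<dots> = real h - real (g - h)"
  proof -
    have "{..<g} \<inter> {t. t < h} = {..<h}" "{..<g} \<inter> - {t. t < h} = {h..<g}" using gh by auto
    thus ?thesis unfolding s_def by (simp add: sum.If_cases)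
  qed
  also have "\<dots> = 0" using gh by simp
  finally show "ones n \<bullet> cycv n cs = 0" .
  let ?A = "\<lambda>t. if t + 1 = g then 0 else t + 1" and ?B = "\<lambda>t. if t = 0 then g - 1 else t - 1"
  have pA: "s t * s (?A t) = (if t = h - 1 \<or> t = g - 1 then -1 else 1)" if "t < g" for t
    using that gh h2 unfolding s_def by auto
  have pB: "s t * s (?B t) = (if t = 0 \<or> t = h then -1 else 1)" if "t < g" for t
    using that gh h2 unfolding s_def by auto
  have "qadj n E (cycv n cs) = (\<Sum>t<g. \<Sum>t'<g. (if t' = (t + 1) mod g \<or> t = (t' + 1) mod g then 1 else 0) * (s t * s t'))"
    unfolding cv vecof_qadj[OF cs] g_def[symmetric] by (intro sum.cong refl) (simp add: adj)
  also have "\<dots> = (\<Sum>t<g. (if t = h - 1 \<or> t = g - 1 then -1 else 1) + (if t = 0 \<or> t = h then -1 else 1))"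
  proof (intro sum.cong refl)
    fix t assume "t \<in> {..<g}"
    hence t: "t < g" by simp
    show "(\<Sum>t'<g. (if t' = (t + 1) mod g \<or> t = (t' + 1) mod g then 1 else 0) * (s t * s t')) =
      (if t = h - 1 \<or> t = g - 1 then -1 else 1) + (if t = 0 \<or> t = h then -1 else 1)"
      unfolding cyc_sum_pts[OF g3 t] pA[OF t, symmetric] pB[OF t, symmetric] ..
  qed
  also have "\<dots> = (2 * (-1) + (real g - 2) * 1) + (2 * (-1) + (real g - 2) * 1)"
    unfolding sum.distrib
    by (subst sum_two_pts2, use gh h2 in auto)+
  finally have q: "qadj n E (cycv n cs) = 2 * real g - 8" by simp
  have "cycv n cs \<bullet> (A_alpha \<alpha> n E *\<^sub>v cycv n cs) = \<alpha> * real r * (cycv n cs \<bullet> cycv n cs) + (1 - \<alpha>) * qadj n E (cycv n cs)"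
    by (rule A_alpha_quad[OF reg]) (simp add: cycv_def)
  thus "cycv n cs \<bullet> (A_alpha \<alpha> n E *\<^sub>v cycv n cs) / (cycv n cs \<bullet> cycv n cs)
       = \<alpha> * real r + 2 * (1 - \<alpha>) * (1 - 4 / real (length cs))"
    unfolding q nn g_def[symmetric] using g3 by (simp add: field_simps)
qed

lemma kyfan_list:
  assumes S: "symm n M" and x0: "x0 \<in> carrier_vec n" "x0 \<noteq> 0\<^sub>v n"
    and f: "\<And>i. i < m \<Longrightarrow> f i \<in> carrier_vec n" "\<And>i. i < m \<Longrightarrow> f i \<noteq> 0\<^sub>v n"
    and orth: "\<And>i j. i < m \<Longrightarrow> j < m \<Longrightarrow> i \<noteq> j \<Longrightarrow> f i \<bullet> f j = 0"
    and orth0: "\<And>i. i < m \<Longrightarrow> x0 \<bullet> f i = 0"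
  shows "x0 \<bullet> (M *\<^sub>v x0) / (x0 \<bullet> x0) + (\<Sum>i<m. f i \<bullet> (M *\<^sub>v f i) / (f i \<bullet> f i)) \<le> S_k (Suc m) M"
proof -
  define xs where "xs = x0 # map f [0..<m]"
  have len: "length xs = Suc m" unfolding xs_def by simp
  have xsS: "xs ! Suc i = f i" if "i < m" for i unfolding xs_def using that by simp
  have xs0: "xs ! 0 = x0" unfolding xs_def by simp
  have "set xs \<subseteq> carrier_vec n" unfolding xs_def using x0 f by auto
  moreover have "xs!i \<bullet> xs!j = 0" if ij: "i < length xs" "j < length xs" "i \<noteq> j" for i j
  proof (cases i)
    case 0
    then obtain j' where j': "j = Suc j'" "j' < m" using ij len by (cases j) auto
    show ?thesis using orth0[OF j'(2)] 0 j' xs0 xsS by simp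
  next
    case (Suc i')
    have i': "i' < m" using Suc ij len by simp
    show ?thesis
    proof (cases j)
      case 0
      have "xs!i \<bullet> xs!j = f i' \<bullet> x0" using Suc 0 xs0 xsS[OF i'] by simp
      also have "\<dots> = x0 \<bullet> f i'" by (rule comm_scalar_prod[OF f(1)[OF i'] x0(1)])
      finally show ?thesis using orth0[OF i'] by simp
    next
      case (Suc j')
      have j': "j' < m" using Suc ij len by simp
      show ?thesis using orth[OF i' j'] Suc \<open>i = Suc i'\<close> ij xsS[OF i'] xsS[OF j'] by simp
    qed
  qed
  moreover have "xs!i \<noteq> 0\<^sub>v n" if "i < length xs" for i
    using that x0 f len xs0 xsS by (cases i) auto
  ultimately have "(\<Sum>i<length xs. (xs!i \<bullet> (M *\<^sub>v xs!i)) / (xs!i \<bullet> xs!i)) \<le> S_k (length xs) M"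
    by (intro kyfan[OF S]) auto
  also have "(\<Sum>i<length xs. (xs!i \<bullet> (M *\<^sub>v xs!i)) / (xs!i \<bullet> xs!i)) =
     x0 \<bullet> (M *\<^sub>v x0) / (x0 \<bullet> x0) + (\<Sum>i<m. f i \<bullet> (M *\<^sub>v f i) / (f i \<bullet> f i))"
    unfolding len sum.lessThan_Suc_shift xs0 using xsS by simp
  finally show ?thesis unfolding len .
qed

lemma S_k_zero:
  assumes S: "symm n M" and Z: "\<And>u. u \<in> carrier_vec n \<Longrightarrow> M *\<^sub>v u = 0\<^sub>v n"
  shows "S_k k M = 0"
proof -
  obtain us where sp0: "length us = n" "orthonormal n us" "length (eigenvalues_desc M) = n"
    "\<forall>i<n. M *\<^sub>v us!i = eigenvalues_desc M ! i \<cdot>\<^sub>v us!i"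
    using spectral_sorted[OF S] by (elim exE conjE) (rule that)
  have z: "eigenvalues_desc M ! i = 0" if i: "i < n" for i
  proof -
    have uc: "us!i \<in> carrier_vec n" and u1: "us!i \<bullet> us!i = 1"
      using sp0(1,2) i unfolding orthonormal_def by auto
    have "eigenvalues_desc M ! i \<cdot>\<^sub>v us!i = 0\<^sub>v n" using sp0(4) i Z[OF uc] by simp
    hence "(eigenvalues_desc M ! i \<cdot>\<^sub>v us!i) \<bullet> us!i = 0" using uc by simp
    thus ?thesis using u1 uc by simp
  qed
  have "\<forall>x\<in>set (eigenvalues_desc M). x = 0" using z sp0(3) by (auto simp: in_set_conv_nth)
  hence z2: "\<forall>x\<in>set (take k (eigenvalues_desc M)). x = 0" by (meson in_set_takeD)
  have "sum_list (take k (eigenvalues_desc M)) = (\<Sum>i<length (take k (eigenvalues_desc M)). take k (eigenvalues_desc M) ! i)"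
    by (simp add: sum_list_sum_nth lessThan_atLeast0)
  also have "\<dots> = 0" by (rule sum.neutral) (use z2 nth_mem in blast)
  finally show ?thesis unfolding S_k_def .
qed

lemma clique_pair:
  assumes G: "simple_graph n E" and reg: "regular n E r" and r: "r \<ge> 1" and K: "is_clique n E K"
  shows "\<exists>a b. a \<in> K \<and> b \<in> K \<and> a \<noteq> b \<and> E a b \<and> a < n \<and> b < n"
proof -
  note Kd = K[unfolded is_clique_def]
  have K1: "K \<noteq> {}" using Kd by (rule conjunct1)
  have K2: "complete_set n E K" using conjunct2[OF Kd] by (rule conjunct1)
  have mx: "\<forall>K'. complete_set n E K' \<and> K \<subseteq> K' \<longrightarrow> K' = K" using conjunct2[OF Kd] by (rule conjunct2)
  obtain u where u: "u \<in> K" using K1 by blast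
  have Kn: "K \<subseteq> {0..<n}" and comp: "\<And>x y. x \<in> K \<Longrightarrow> y \<in> K \<Longrightarrow> x \<noteq> y \<Longrightarrow> E x y"
    using K2 unfolding complete_set_def by auto
  have un: "u < n" using u Kn by auto
  have "card {j. j < n \<and> E u j} = r" using reg un unfolding regular_def degree_def by auto
  hence "card {j. j < n \<and> E u j} \<noteq> 0" using r by simp
  hence "{j. j < n \<and> E u j} \<noteq> {}" by (metis card.empty)
  then obtain w where w: "w < n" "E u w" by auto
  have wu: "w \<noteq> u" using G un w unfolding simple_graph_def by auto
  show ?thesis
  proof (cases "\<exists>v\<in>K. v \<noteq> u")
    case True
    then obtain v where v: "v \<in> K" "v \<noteq> u" by auto
    have "E u v" using comp[OF u v(1)] v(2) by simp
    moreover have "v < n" using v(1) Kn by auto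
    ultimately show ?thesis using u v un by blast
  next
    case False
    have Ku: "K = {u}"
    proof
      show "K \<subseteq> {u}" using False by blast
      show "{u} \<subseteq> K" using u by blast
    qed
    have sym: "\<forall>i<n. \<forall>j<n. (E i j \<longleftrightarrow> E j i)" using G unfolding simple_graph_def by (rule conjunct1)
    have Ewu: "E w u" using sym[rule_format, OF un w(1)] w(2) by simp
    have c1: "complete_set n E {u, w}" unfolding complete_set_def
      using un w Ewu by auto
    have c2: "K \<subseteq> {u, w}" using Ku by simp
    have "{u, w} = K" using mx[rule_format, OF conjI[OF c1 c2]] .
    hence "w \<in> K" by blast
    hence False using Ku wu by simp
    thus ?thesis ..
  qed
qed

lemma zero_graph:
  assumes reg: "regular n E 0" and u: "u \<in> carrier_vec n"
  shows "A_alpha \<alpha> n E *\<^sub>v u = 0\<^sub>v n"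
proof (rule eq_vecI)
  fix i assume "i < dim_vec (0\<^sub>v n :: real vec)"
  hence i: "i < n" by simp
  have nE: "\<not> E i j" if "j < n" for j
  proof
    assume "E i j"
    hence "j \<in> {j. j < n \<and> E i j}" using that by auto
    moreover have "card {j. j < n \<and> E i j} = 0" using reg i unfolding regular_def degree_def by blast
    moreover have "finite {j. j < n \<and> E i j}" by simp
    ultimately show False by (metis card_0_eq empty_iff)
  qed
  have "(A_alpha \<alpha> n E *\<^sub>v u) $ i = (\<Sum>j<n. A_alpha \<alpha> n E $$ (i,j) * u$j)"
    using i u A_alpha_carrier[of \<alpha> n E] by (simp add: scalar_prod_def lessThan_atLeast0)
  also have "\<dots> = 0"
  proof (intro sum.neutral ballI)
    fix j assume "j \<in> {..<n}"
    hence j: "j < n" by simp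
    have "Defs.degree n E i = 0" using reg i unfolding regular_def by blast
    thus "A_alpha \<alpha> n E $$ (i,j) * u$j = 0" using nE[OF j] A_alpha_entry[OF i j, of \<alpha> E] by (cases "i = j") auto
  qed
  finally show "(A_alpha \<alpha> n E *\<^sub>v u) $ i = (0\<^sub>v n :: real vec) $ i" using i by simp
qed (use A_alpha_carrier[of \<alpha> n E] in auto)

theorem theorem5p2:
  fixes n r :: nat and E :: "nat \<Rightarrow> nat \<Rightarrow> bool" and \<alpha> :: real
  assumes "n \<ge> 1"
    and "simple_graph n E"
    and "regular n E r"
    and "0 \<le> \<alpha>" and "\<alpha> \<le> 1"
  shows
    "(\<forall>(t::nat) (Q::nat \<Rightarrow> nat set).
        (\<forall>i<t. is_clique n E (Q i)) \<and>
        (\<forall>i<t. \<forall>j<t. i \<noteq> j \<longrightarrow> Q i \<inter> Q j = {}) \<longrightarrow>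
        (\<forall>k. 1 \<le> k \<and> k \<le> t + 1 \<longrightarrow>
           S_k k (A_alpha \<alpha> n E) \<ge> \<alpha> * real k * real r + (1 - \<alpha>) * (real r - real k + 1)))
   \<and>
    (\<forall>(c::nat) (C::nat \<Rightarrow> nat list).
        (\<forall>i<c. induced_cycle n E (C i) \<and> even (length (C i))) \<and>
        (\<forall>i<c. \<forall>j<c. i \<noteq> j \<longrightarrow> set (C i) \<inter> set (C j) = {}) \<and>
        (\<forall>i<c. \<forall>j<c. i \<le> j \<longrightarrow> length (C j) \<le> length (C i)) \<longrightarrow>
        (\<forall>k. 1 \<le> k \<and> k \<le> c + 1 \<longrightarrow>
           S_k k (A_alpha \<alpha> n E) \<ge>
             (\<alpha> * real k + 1 - \<alpha>) * real r
             + 2 * (1 - \<alpha>) * (\<Sum>i<k - 1. (1 - 4 / real (length (C i))))))"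
proof (intro conjI allI impI)
  note n = assms(1) and G = assms(2) and reg = assms(3) and a0 = assms(4) and a1 = assms(5)
  let ?M = "A_alpha \<alpha> n E"
  have S: "symm n ?M" by (rule A_alpha_symm[OF G])
  have onesc: "ones n \<in> carrier_vec n" unfolding ones_def by simp
  note op2 = ones_props(2)[OF reg n] and op3 = ones_props(3)[OF reg n, of \<alpha>]
  {
    fix t :: nat and Q :: "nat \<Rightarrow> nat set" and k :: nat
    assume H: "(\<forall>i<t. is_clique n E (Q i)) \<and> (\<forall>i<t. \<forall>j<t. i \<noteq> j \<longrightarrow> Q i \<inter> Q j = {})"
      and k: "1 \<le> k \<and> k \<le> t + 1"
    show "S_k k ?M \<ge> \<alpha> * real k * real r + (1 - \<alpha>) * (real r - real k + 1)"
    proof (cases "r = 0")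
      case True
      have "S_k k ?M = 0"
      proof (rule S_k_zero[OF S])
        fix u :: "real vec" assume "u \<in> carrier_vec n"
        thus "?M *\<^sub>v u = 0\<^sub>v n" using zero_graph[of n E u \<alpha>] reg True by simp
      qed
      moreover have "(1 - \<alpha>) * (1 - real k) \<le> 0" using a1 k by (simp add: mult_nonneg_nonpos)
      ultimately show ?thesis using True by simp
    next
      case False
      hence r1: "r \<ge> 1" by simp
      have "\<forall>i\<in>{..<t}. \<exists>ab. fst ab \<in> Q i \<and> snd ab \<in> Q i \<and> fst ab \<noteq> snd ab \<and> E (fst ab) (snd ab) \<and> fst ab < n \<and> snd ab < n"
      proof
        fix i assume "i \<in> {..<t}"
        hence "is_clique n E (Q i)" using H by blast
        from clique_pair[OF G reg r1 this] obtain a b where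
          ab: "a \<in> Q i" "b \<in> Q i" "a \<noteq> b" "E a b" "a < n" "b < n" by blast
        show "\<exists>ab. fst ab \<in> Q i \<and> snd ab \<in> Q i \<and> fst ab \<noteq> snd ab \<and> E (fst ab) (snd ab) \<and> fst ab < n \<and> snd ab < n"
          by (rule exI[of _ "(a, b)"]) (use ab in simp)
      qed
      from bchoice[OF this] obtain F where F0: "\<forall>i\<in>{..<t}. fst (F i) \<in> Q i \<and> snd (F i) \<in> Q i \<and> fst (F i) \<noteq> snd (F i)
          \<and> E (fst (F i)) (snd (F i)) \<and> fst (F i) < n \<and> snd (F i) < n" by blast
      have F: "\<And>i. i < t \<Longrightarrow> fst (F i) \<in> Q i \<and> snd (F i) \<in> Q i \<and> fst (F i) \<noteq> snd (F i)
          \<and> E (fst (F i)) (snd (F i)) \<and> fst (F i) < n \<and> snd (F i) < n" using F0 by blast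
      define m where "m = k - 1"
      have mt: "m \<le> t" and km: "k = Suc m" unfolding m_def using k by auto
      define f where "f i = pairv n (fst (F i)) (snd (F i))" for i
      have fp: "i < m \<Longrightarrow> f i \<bullet> f i = 2 \<and> f i \<noteq> 0\<^sub>v n \<and>
          f i \<bullet> (?M *\<^sub>v f i) / (f i \<bullet> f i) = \<alpha> * real r - (1 - \<alpha>) \<and> ones n \<bullet> f i = 0" for i
      proof -
        assume i: "i < m"
        hence Fi: "fst (F i) < n" "snd (F i) < n" "fst (F i) \<noteq> snd (F i)" "E (fst (F i)) (snd (F i))"
          using F[of i] mt by auto
        show ?thesis unfolding f_def using pair_props(1,2,4)[OF reg G Fi] pair_props(3)[OF reg G Fi, of \<alpha>]
          by blast
      qed
      have "ones n \<bullet> (?M *\<^sub>v ones n) / (ones n \<bullet> ones n) + (\<Sum>i<m. f i \<bullet> (?M *\<^sub>v f i) / (f i \<bullet> f i)) \<le> S_k (Suc m) ?M"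
      proof (rule kyfan_list[OF S onesc op2])
        show "\<And>i. i < m \<Longrightarrow> f i \<in> carrier_vec n" unfolding f_def pairv_def by simp
        show "\<And>i. i < m \<Longrightarrow> f i \<noteq> 0\<^sub>v n" using fp by blast
        show "\<And>i. i < m \<Longrightarrow> ones n \<bullet> f i = 0" using fp by blast
        show "\<And>i j. i < m \<Longrightarrow> j < m \<Longrightarrow> i \<noteq> j \<Longrightarrow> f i \<bullet> f j = 0"
        proof -
          fix i j assume ij: "i < m" "j < m" "i \<noteq> j"
          have "Q i \<inter> Q j = {}" using H ij mt by auto
          thus "f i \<bullet> f j = 0" unfolding f_def pairv_def
            by (intro vecof_orth) (use F[of i] F[of j] ij mt in auto)
        qed
      qed
      also have "ones n \<bullet> (?M *\<^sub>v ones n) / (ones n \<bullet> ones n) + (\<Sum>i<m. f i \<bullet> (?M *\<^sub>v f i) / (f i \<bullet> f i))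
          = real r + real m * (\<alpha> * real r - (1 - \<alpha>))"
      proof -
        have "(\<Sum>i<m. f i \<bullet> (?M *\<^sub>v f i) / (f i \<bullet> f i)) = (\<Sum>i<m. \<alpha> * real r - (1 - \<alpha>))"
          by (rule sum.cong[OF refl]) (use fp in blast)
        thus ?thesis using op3 by simp
      qed
      finally show ?thesis unfolding km by (simp add: algebra_simps)
    qed
  }
  {
    fix c :: nat and C :: "nat \<Rightarrow> nat list" and k :: nat
    assume H: "(\<forall>i<c. induced_cycle n E (C i) \<and> even (length (C i))) \<and>
        (\<forall>i<c. \<forall>j<c. i \<noteq> j \<longrightarrow> set (C i) \<inter> set (C j) = {}) \<and>
        (\<forall>i<c. \<forall>j<c. i \<le> j \<longrightarrow> length (C j) \<le> length (C i))"
      and k: "1 \<le> k \<and> k \<le> c + 1"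
    define m where "m = k - 1"
    have mc: "m \<le> c" and km: "k = Suc m" unfolding m_def using k by auto
    define f where "f i = cycv n (C i)" for i
    have fp: "i < m \<Longrightarrow> f i \<noteq> 0\<^sub>v n \<and>
        f i \<bullet> (?M *\<^sub>v f i) / (f i \<bullet> f i) = \<alpha> * real r + 2 * (1 - \<alpha>) * (1 - 4 / real (length (C i))) \<and>
        ones n \<bullet> f i = 0" for i
    proof -
      assume i: "i < m"
      have Ci: "induced_cycle n E (C i)" "even (length (C i))" using H i mc by auto
      show ?thesis unfolding f_def using cyc_props(2,4)[OF reg Ci] cyc_props(3)[OF reg Ci, of \<alpha>] by blast
    qed
    have Cn: "set (C i) \<subseteq> {..<n}" if i: "i < c" for i
    proof -
      have "induced_cycle n E (C i)" using H i by blast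
      thus ?thesis unfolding induced_cycle_def Let_def by auto
    qed
    have "ones n \<bullet> (?M *\<^sub>v ones n) / (ones n \<bullet> ones n) + (\<Sum>i<m. f i \<bullet> (?M *\<^sub>v f i) / (f i \<bullet> f i)) \<le> S_k (Suc m) ?M"
    proof (rule kyfan_list[OF S onesc op2])
      show "\<And>i. i < m \<Longrightarrow> f i \<in> carrier_vec n" unfolding f_def cycv_def by simp
      show "\<And>i. i < m \<Longrightarrow> f i \<noteq> 0\<^sub>v n" using fp by blast
      show "\<And>i. i < m \<Longrightarrow> ones n \<bullet> f i = 0" using fp by blast
      show "\<And>i j. i < m \<Longrightarrow> j < m \<Longrightarrow> i \<noteq> j \<Longrightarrow> f i \<bullet> f j = 0"
      proof -
        fix i j assume ij: "i < m" "j < m" "i \<noteq> j"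
        have "set (C i) \<inter> set (C j) = {}" using H ij mc by auto
        thus "f i \<bullet> f j = 0" unfolding f_def cycv_def
          by (intro vecof_orth) (use Cn ij mc in auto)
      qed
    qed
    also have "ones n \<bullet> (?M *\<^sub>v ones n) / (ones n \<bullet> ones n) + (\<Sum>i<m. f i \<bullet> (?M *\<^sub>v f i) / (f i \<bullet> f i))
        = real r + (\<Sum>i<m. \<alpha> * real r + 2 * (1 - \<alpha>) * (1 - 4 / real (length (C i))))"
    proof -
      have "(\<Sum>i<m. f i \<bullet> (?M *\<^sub>v f i) / (f i \<bullet> f i)) = (\<Sum>i<m. \<alpha> * real r + 2 * (1 - \<alpha>) * (1 - 4 / real (length (C i))))"
        by (rule sum.cong[OF refl]) (use fp in blast)
      thus ?thesis using op3 by simp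
    qed
    also have "\<dots> = real r + real m * \<alpha> * real r + 2 * (1 - \<alpha>) * (\<Sum>i<m. (1 - 4 / real (length (C i))))"
      by (simp add: sum.distrib sum_distrib_left)
    finally show "S_k k ?M \<ge> (\<alpha> * real k + 1 - \<alpha>) * real r
             + 2 * (1 - \<alpha>) * (\<Sum>i<k - 1. (1 - 4 / real (length (C i))))"
      unfolding km m_def[symmetric] by (simp add: algebra_simps)
  }
qed

end
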